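(* Under the hypotheses of Theorem 2 (A1, A2, A3(D), $\beta\in[0,1)$, $0<\eta<2N/(\sigma_{\max}^2H_{\ell^{-1}(N\mathcal{L}(w(1)))})$), the GDM iterates satisfy $$\sum_{t=1}^\infty\|w(t+1)-w(t)\|^2<\infty\quad\text{and}\quad\|w(t)\|=O(\sqrt t).$$
   Context: Setting. The data are $S=\{x_1,\dots,x_N\}\subset\mathbb{R}^d$, with labels absorbed. The empirical loss is $\mathcal{L}(w)=\frac1N\sum_i\ell(\langle w,x_i\rangle)$. $\sigma_{\max}$ is the spectral norm of $(x_1,\dots,x_N)$. A1: there is $w$ with $\langle w,x_i\rangle>0$ for all $i$. A2: $\ell$ is differentiable, $\ell'<0$, $\ell(x),\ell'(x)\to0$ as $x\to\infty$, and $\limsup_{x\to-\infty}\ell'(x)<0$. There are positive $\mu_\pm,x_\pm$ with $-\ell'(x)\le(1+e^{-\mu_+x})e^{-x}$ for $x>x_+$ and $-\ell'(x)\ge(1-e^{-\mu_-x})e^{-x}$ for $x>x_-$. $\ell^{-1}$ is the inverse of $\ell:\mathbb{R}\to(0,\infty)$. A3(D): $H_{s_0}$ is the smallest constant with $|\ell'(x)-\ell'(y)|\le H_{s_0}|x-y|$ for $x,y\ge s_0$ (finite for every $s_0$). GDM: $m(0)=0$, $m(t)=\beta m(t-1)+(1-\beta)\nabla\mathcal{L}(w(t))$, $w(t+1)=w(t)-\eta m(t)$ for $t\ge1$, from an arbitrary $w(1)$. *)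

theory Defs
  imports "HOL-Analysis.Analysis" "HOL-Library.Landau_Symbols" "HOL-Library.Liminf_Limsup"
begin

definition emp_loss :: "(real \<Rightarrow> real) \<Rightarrow> nat \<Rightarrow> (nat \<Rightarrow> 'a::real_inner) \<Rightarrow> 'a \<Rightarrow> real" where
  "emp_loss l N x w = (1 / real N) * (\<Sum>i<N. l (inner w (x i)))"

definition emp_grad :: "(real \<Rightarrow> real) \<Rightarrow> nat \<Rightarrow> (nat \<Rightarrow> 'a::real_inner) \<Rightarrow> 'a \<Rightarrow> 'a" where
  "emp_grad l N x w = (1 / real N) *\<^sub>R (\<Sum>i<N. deriv l (inner w (x i)) *\<^sub>R x i)"

text \<open>Spectral norm of the d x N data matrix (x_1,...,x_N): the operator norm
  sup { || sum_i v_i x_i || : ||v||_2 <= 1 }.\<close>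
definition sigma_max :: "nat \<Rightarrow> (nat \<Rightarrow> 'a::real_normed_vector) \<Rightarrow> real" where
  "sigma_max N x = Sup {norm (\<Sum>i<N. v i *\<^sub>R x i) | v. (\<Sum>i<N. (v i)\<^sup>2) \<le> 1}"

definition lip_const :: "(real \<Rightarrow> real) \<Rightarrow> real \<Rightarrow> real" where
  "lip_const l s0 = Sup {\<bar>deriv l x - deriv l y\<bar> / \<bar>x - y\<bar> | x y. s0 \<le> x \<and> s0 \<le> y \<and> x \<noteq> y}"

definition loss_inv :: "(real \<Rightarrow> real) \<Rightarrow> real \<Rightarrow> real" where
  "loss_inv l y = (THE x. l x = y)"

end

theory Submission
  imports Defs
begin

lemma loss_facts:
  fixes l :: "real \<Rightarrow> real"
  assumes diff: "\<forall>s. l differentiable (at s)"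
    and neg: "\<forall>s. deriv l s < 0"
    and lim: "(l \<longlongrightarrow> 0) at_top"
    and lsup: "Limsup at_bot (\<lambda>s. ereal (deriv l s)) < 0"
  shows "\<forall>s. l s > 0" "\<forall>a b. a < b \<longrightarrow> l b < l a" "\<forall>y>0. \<exists>s. l s = y"
proof -
  have D: "\<And>s. DERIV l s :> deriv l s" using diff DERIV_deriv_iff_real_differentiable by blast
  show pos: "\<forall>s. l s > 0"
  proof
    fix s show "l s > 0"
      by (rule DERIV_neg_imp_decreasing_at_top[where b=s and flim=0]) (use D neg lim in auto)
  qed
  show dec: "\<forall>a b. a < b \<longrightarrow> l b < l a"
  proof (intro allI impI)
    fix a b :: real assume "a < b"
    then show "l b < l a" by (rule DERIV_neg_imp_decreasing) (use D neg in auto)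
  qed
  show "\<forall>y>0. \<exists>s. l s = y"
  proof (intro allI impI)
    fix y :: real assume y: "y > 0"
    obtain z where z: "Limsup at_bot (\<lambda>s. ereal (deriv l s)) < z" "z < 0"
      using lsup dense by blast
    obtain r where r: "z = ereal r" "r < 0"
      using z by (cases z) auto
    have "eventually (\<lambda>s. ereal (deriv l s) < z) at_bot" using Limsup_lessD[OF z(1)] .
    then obtain R where R: "\<And>s. s \<le> R \<Longrightarrow> deriv l s < r"
      using r by (auto simp: eventually_at_bot_linorder)
    have low: "l s \<ge> l R + (-r) * (R - s)" if "s < R" for s
    proof -
      obtain \<xi> where xi: "s < \<xi>" "\<xi> < R" "l R - l s = (R - s) * deriv l \<xi>"
        using MVT2[OF \<open>s < R\<close>, of l "deriv l"] D by blast
      have "deriv l \<xi> < r" using R xi by auto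
      hence "(R - s) * deriv l \<xi> \<le> (R - s) * r" using \<open>s<R\<close> by (intro mult_left_mono) auto
      thus ?thesis using xi by (simp add: algebra_simps)
    qed
    define a where "a = R - (\<bar>y\<bar> + \<bar>l R\<bar>) / (-r) - 1"
    have aR: "a < R" unfolding a_def using r by (auto simp: field_simps)
    have "l a \<ge> l R + (-r) * (R - a)" using low aR by blast
    also have "(-r) * (R - a) = \<bar>y\<bar> + \<bar>l R\<bar> + (-r)" unfolding a_def using r by (simp add: field_simps)
    finally have ya: "y \<le> l a" using r by linarith
    have "eventually (\<lambda>s. l s < y) at_top" using lim y by (rule order_tendstoD)
    then obtain B where B: "\<And>s. s \<ge> B \<Longrightarrow> l s < y" by (auto simp: eventually_at_top_linorder)
    define b where "b = max a B"
    have yb: "l b \<le> y" using B[of b] unfolding b_def by auto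
    have "\<exists>s\<ge>a. s \<le> b \<and> l s = y"
      by (rule IVT2[of l b y a]) (use yb ya in \<open>auto simp: b_def intro: DERIV_isCont D\<close>)
    thus "\<exists>s. l s = y" by blast
  qed
qed


lemma sigma_bdd:
  fixes x :: "nat \<Rightarrow> 'a::real_normed_vector"
  shows "bdd_above {norm (\<Sum>i<N. v i *\<^sub>R x i) | v. (\<Sum>i<N. (v i)\<^sup>2) \<le> 1}"
proof (rule bdd_aboveI[where M="\<Sum>i<N. norm (x i)"], clarify)
  fix v :: "nat \<Rightarrow> real" assume v: "(\<Sum>i<N. (v i)\<^sup>2) \<le> 1"
  have vi: "\<bar>v i\<bar> \<le> 1" if "i < N" for i
  proof -
    have "(v i)\<^sup>2 \<le> (\<Sum>i<N. (v i)\<^sup>2)"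
      using that by (intro member_le_sum) auto
    hence "(v i)\<^sup>2 \<le> 1" using v by linarith
    thus ?thesis by (simp add: abs_square_le_1)
  qed
  have "norm (\<Sum>i<N. v i *\<^sub>R x i) \<le> (\<Sum>i<N. norm (v i *\<^sub>R x i))" by (rule norm_sum)
  also have "\<dots> \<le> (\<Sum>i<N. norm (x i))"
    by (intro sum_mono) (use vi in \<open>auto intro: mult_left_le_one_le\<close>)
  finally show "norm (\<Sum>i<N. v i *\<^sub>R x i) \<le> (\<Sum>i<N. norm (x i))" .
qed

lemma sigma_transpose:
  fixes x :: "nat \<Rightarrow> 'a::real_inner"
  shows "(\<Sum>i<N. (inner u (x i))\<^sup>2) \<le> (sigma_max N x)\<^sup>2 * (norm u)\<^sup>2"
proof -
  define S where "S = (\<Sum>i<N. (inner u (x i))\<^sup>2)"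
  have S0: "S \<ge> 0" unfolding S_def by (auto intro: sum_nonneg)
  show ?thesis
  proof (cases "S = 0")
    case True thus ?thesis by (simp add: S_def[symmetric])
  next
    case False
    hence Sp: "S > 0" using S0 by auto
    define v where "v i = inner u (x i) / sqrt S" for i
    have "(\<Sum>i<N. (v i)\<^sup>2) = (\<Sum>i<N. (inner u (x i))\<^sup>2) / S"
      unfolding v_def using Sp by (simp add: power_divide sum_divide_distrib)
    hence v1: "(\<Sum>i<N. (v i)\<^sup>2) \<le> 1" using Sp by (simp add: S_def[symmetric])
    have le: "norm (\<Sum>i<N. v i *\<^sub>R x i) \<le> sigma_max N x"
      unfolding sigma_max_def by (rule cSup_upper) (use v1 sigma_bdd in auto)
    have "inner u (\<Sum>i<N. v i *\<^sub>R x i) = (\<Sum>i<N. v i * inner u (x i))"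
      by (simp add: inner_sum_right)
    also have "\<dots> = S / sqrt S" unfolding v_def S_def
      by (simp add: sum_divide_distrib power2_eq_square)
    also have "\<dots> = sqrt S" using Sp by (simp add: real_div_sqrt)
    finally have eq: "inner u (\<Sum>i<N. v i *\<^sub>R x i) = sqrt S" .
    have "sqrt S \<le> norm u * norm (\<Sum>i<N. v i *\<^sub>R x i)"
      using Cauchy_Schwarz_ineq2[of u "\<Sum>i<N. v i *\<^sub>R x i"] eq by simp
    also have "\<dots> \<le> norm u * sigma_max N x" by (intro mult_left_mono le) auto
    finally have "sqrt S \<le> norm u * sigma_max N x" .
    hence "(sqrt S)\<^sup>2 \<le> (norm u * sigma_max N x)\<^sup>2"
      using S0 by (intro power_mono) auto
    thus ?thesis using S0 by (simp add: S_def power_mult_distrib mult.commute)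
  qed
qed


lemma descent:
  fixes x :: "nat \<Rightarrow> 'a::real_inner" and l :: "real \<Rightarrow> real"
  assumes D: "\<And>s. DERIV l s :> deriv l s"
    and lip: "\<And>u v. s0 \<le> u \<Longrightarrow> s0 \<le> v \<Longrightarrow> \<bar>deriv l u - deriv l v\<bar> \<le> H * \<bar>u - v\<bar>"
    and H: "H \<ge> 0" and N: "N > 0"
    and p: "\<forall>i<N. s0 \<le> inner p (x i)" and q: "\<forall>i<N. s0 \<le> inner q (x i)"
  shows "emp_loss l N x q \<le> emp_loss l N x p + inner (emp_grad l N x p) (q - p)
           + (H * (sigma_max N x)\<^sup>2 / N) / 2 * (norm (q - p))\<^sup>2"
proof -
  define a where "a i = inner p (x i)" for i
  define d where "d i = inner (q - p) (x i)" for i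
  define Dn where "Dn = (norm (q - p))\<^sup>2"
  define K where "K = H * (sigma_max N x)\<^sup>2 / N"
  define G where "G = (1 / real N) * (\<Sum>i<N. deriv l (a i) * d i)"
  define \<psi> where "\<psi> s = (1 / real N) * (\<Sum>i<N. l (a i + s * d i)) - s * G - K / 2 * s\<^sup>2 * Dn" for s
  define \<psi>' where "\<psi>' s = (1 / real N) * (\<Sum>i<N. deriv l (a i + s * d i) * d i) - G - K * s * Dn" for s
  have K0: "K \<ge> 0" unfolding K_def using H by auto
  have der: "DERIV \<psi> s :> \<psi>' s" for s
    unfolding \<psi>_def \<psi>'_def
    using N by (auto intro!: derivative_eq_intros DERIV_chain2[OF D] simp: power2_eq_square algebra_simps)
  have seg: "s0 \<le> a i + s * d i" if "0 \<le> s" "s \<le> 1" "i < N" for i s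
  proof -
    have "a i + s * d i = (1 - s) * a i + s * inner q (x i)"
      unfolding a_def d_def by (simp add: inner_diff_left algebra_simps)
    also have "\<dots> \<ge> (1 - s) * s0 + s * s0"
      using p q that unfolding a_def by (intro add_mono mult_left_mono) auto
    finally show ?thesis by (simp add: algebra_simps)
  qed
  have sumd: "(\<Sum>i<N. (d i)\<^sup>2) \<le> (sigma_max N x)\<^sup>2 * Dn"
    unfolding d_def Dn_def by (rule sigma_transpose)
  have neg: "\<psi>' s \<le> 0" if s: "0 \<le> s" "s \<le> 1" for s
  proof -
    have trm: "(deriv l (a i + s * d i) - deriv l (a i)) * d i \<le> H * s * (d i)\<^sup>2" if i: "i < N" for i
    proof -
      have "(deriv l (a i + s * d i) - deriv l (a i)) * d i
            \<le> \<bar>deriv l (a i + s * d i) - deriv l (a i)\<bar> * \<bar>d i\<bar>"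
        by (metis abs_ge_self abs_mult)
      also have "\<dots> \<le> (H * \<bar>(a i + s * d i) - a i\<bar>) * \<bar>d i\<bar>"
        by (intro mult_right_mono lip seg) (use s i seg[of 0 i] in auto)
      also have "\<dots> = H * s * (d i)\<^sup>2" using s by (simp add: abs_mult power2_eq_square)
      finally show ?thesis .
    qed
    have "\<psi>' s = (1 / real N) * (\<Sum>i<N. (deriv l (a i + s * d i) - deriv l (a i)) * d i) - K * s * Dn"
      unfolding \<psi>'_def G_def by (simp add: sum_subtractf left_diff_distrib algebra_simps)
    also have "\<dots> \<le> (1 / real N) * (\<Sum>i<N. H * s * (d i)\<^sup>2) - K * s * Dn"
      using trm N by (intro diff_right_mono mult_left_mono sum_mono) auto
    also have "(\<Sum>i<N. H * s * (d i)\<^sup>2) = H * s * (\<Sum>i<N. (d i)\<^sup>2)" by (simp add: sum_distrib_left)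
    also have "(1 / real N) * (H * s * (\<Sum>i<N. (d i)\<^sup>2)) \<le> (1 / real N) * (H * s * ((sigma_max N x)\<^sup>2 * Dn))"
      using H s sumd N by (intro mult_left_mono) auto
    also have "(1 / real N) * (H * s * ((sigma_max N x)\<^sup>2 * Dn)) = K * s * Dn"
      unfolding K_def using N by (simp add: field_simps)
    finally show ?thesis by simp
  qed
  have "\<psi> 1 \<le> \<psi> 0"
    by (rule DERIV_nonpos_imp_nonincreasing[of 0 1 \<psi>]) (use der neg in auto)
  moreover have "\<psi> 0 = emp_loss l N x p" unfolding \<psi>_def emp_loss_def a_def by simp
  moreover have "\<psi> 1 = emp_loss l N x q - inner (emp_grad l N x p) (q - p) - K / 2 * Dn"
  proof -
    have "a i + d i = inner q (x i)" for i unfolding a_def d_def by (simp add: inner_diff_left)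
    moreover have "inner (emp_grad l N x p) (q - p) = G"
      unfolding emp_grad_def G_def a_def d_def
      by (simp add: inner_sum_left inner_sum_right inner_commute)
    ultimately show ?thesis unfolding \<psi>_def emp_loss_def by simp
  qed
  ultimately show ?thesis unfolding K_def Dn_def by simp
qed


lemma sum_sqrt_bound:
  fixes a :: "nat \<Rightarrow> real"
  assumes "\<And>k. 0 \<le> a k" "(\<Sum>k<n. (a k)\<^sup>2) \<le> B" "0 \<le> B"
  shows "(\<Sum>k<n. a k) \<le> sqrt ((B + 1) * (real n + 1))"
proof -
  define lam where "lam = sqrt ((B + 1) / (real n + 1))"
  have lp: "lam > 0" unfolding lam_def using assms(3) by auto
  have each: "a k \<le> ((a k)\<^sup>2 / lam + lam) / 2" for k
  proof -
    have "0 \<le> (a k - lam)\<^sup>2 / lam" using lp by auto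
    also have "(a k - lam)\<^sup>2 / lam = (a k)\<^sup>2 / lam + lam - 2 * a k"
      using lp by (simp add: power2_eq_square field_simps)
    finally show ?thesis by simp
  qed
  have "(\<Sum>k<n. a k) \<le> (\<Sum>k<n. ((a k)\<^sup>2 / lam + lam) / 2)" by (intro sum_mono each)
  also have "\<dots> = ((\<Sum>k<n. (a k)\<^sup>2) / lam + real n * lam) / 2"
    by (simp add: sum.distrib sum_divide_distrib[symmetric] add_divide_distrib)
  also have "\<dots> \<le> ((B + 1) / lam + (real n + 1) * lam) / 2"
    using assms(2) lp by (intro divide_right_mono add_mono divide_right_mono mult_right_mono) auto
  also have "(B + 1) / lam = sqrt ((B + 1) * (real n + 1))"
  proof -
    have A: "B + 1 > 0" "real n + 1 > 0" using assms(3) by auto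
    have "(B + 1) / lam = (B + 1) / sqrt (B + 1) * sqrt (real n + 1)"
      unfolding lam_def using A by (simp add: real_sqrt_divide)
    also have "(B + 1) / sqrt (B + 1) = sqrt (B + 1)" using A by (simp add: real_div_sqrt)
    finally show ?thesis by (simp add: real_sqrt_mult)
  qed
  also have "(real n + 1) * lam = sqrt ((B + 1) * (real n + 1))"
  proof -
    have A: "B + 1 > 0" "real n + 1 > 0" using assms(3) by auto
    have "(real n + 1) * lam = (real n + 1) / sqrt (real n + 1) * sqrt (B + 1)"
      unfolding lam_def using A by (simp add: real_sqrt_divide)
    also have "(real n + 1) / sqrt (real n + 1) = sqrt (real n + 1)" using A by (simp add: real_div_sqrt)
    finally show ?thesis by (simp add: real_sqrt_mult)
  qed
  finally show ?thesis by simp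
qed

theorem mainTheorem9:
  fixes x :: "nat \<Rightarrow> 'a::euclidean_space"
    and N :: nat
    and l :: "real \<Rightarrow> real"
    and \<beta> \<eta> :: real
    and w m :: "nat \<Rightarrow> 'a"
  assumes N_pos: "N > 0"
    and A1: "\<exists>u. \<forall>i<N. inner u (x i) > 0"
    and A2_diff: "\<forall>s. l differentiable (at s)"
    and A2_neg: "\<forall>s. deriv l s < 0"
    and A2_lim: "(l \<longlongrightarrow> 0) at_top"
    and A2_dlim: "(deriv l \<longlongrightarrow> 0) at_top"
    and A2_limsup: "Limsup at_bot (\<lambda>s. ereal (deriv l s)) < 0"
    and A2_upper: "\<exists>\<mu>p xp. \<mu>p > 0 \<and> xp > 0 \<and>
                   (\<forall>s>xp. - deriv l s \<le> (1 + exp (- \<mu>p * s)) * exp (- s))"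
    and A2_lower: "\<exists>\<mu>m xm. \<mu>m > 0 \<and> xm > 0 \<and>
                   (\<forall>s>xm. - deriv l s \<ge> (1 - exp (- \<mu>m * s)) * exp (- s))"
    and A3: "\<forall>s0. bdd_above {\<bar>deriv l a - deriv l b\<bar> / \<bar>a - b\<bar> | a b. s0 \<le> a \<and> s0 \<le> b \<and> a \<noteq> b}"
    and beta: "0 \<le> \<beta>" "\<beta> < 1"
    and eta_pos: "0 < \<eta>"
    and eta_bound: "\<eta> < 2 * real N /
          ((sigma_max N x)\<^sup>2 * lip_const l (loss_inv l (real N * emp_loss l N x (w 1))))"
    and m0: "m 0 = 0"
    and m_step: "\<forall>t\<ge>1. m t = \<beta> *\<^sub>R m (t - 1) + (1 - \<beta>) *\<^sub>R emp_grad l N x (w t)"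
    and w_step: "\<forall>t\<ge>1. w (t + 1) = w t - \<eta> *\<^sub>R m t"
  shows "summable (\<lambda>t. (norm (w (t + 2) - w (t + 1)))\<^sup>2)
       \<and> (\<lambda>t. norm (w t)) \<in> O(\<lambda>t. sqrt (real t))"
proof -
  have D: "\<And>s. DERIV l s :> deriv l s" using A2_diff DERIV_deriv_iff_real_differentiable by blast
  note LF = loss_facts[OF A2_diff A2_neg A2_lim A2_limsup]
  have lpos: "\<And>s. l s > 0" using LF(1) by blast
  have ldec: "\<And>a b. a < b \<Longrightarrow> l b < l a" using LF(2) by blast
  have ldec_iff: "l a \<le> l b \<longleftrightarrow> b \<le> a" for a b
    using ldec[of a b] ldec[of b a] by (cases "a = b") (auto simp: not_le[symmetric])
  define L where "L p = emp_loss l N x p" for p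
  define L1 where "L1 = L (w 1)"
  have Lsum: "real N * L p = (\<Sum>i<N. l (inner p (x i)))" for p
    unfolding L_def emp_loss_def using N_pos by simp
  have Lpos: "L p > 0" for p
  proof -
    have "(\<Sum>i<N. l (inner p (x i))) > 0" using N_pos lpos by (intro sum_pos) auto
    hence "real N * L p > 0" using Lsum by simp
    thus ?thesis using N_pos by (simp add: zero_less_mult_iff)
  qed
  have L1pos: "L1 > 0" unfolding L1_def by (rule Lpos)
  obtain s0 where s0: "l s0 = real N * L1" using LF(3) L1pos N_pos by (meson mult_pos_pos of_nat_0_less_iff)
  have s0def: "loss_inv l (real N * emp_loss l N x (w 1)) = s0"
    unfolding loss_inv_def
  proof (rule the_equality)
    show "l s0 = real N * emp_loss l N x (w 1)" using s0 unfolding L1_def L_def .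
  next
    fix z assume "l z = real N * emp_loss l N x (w 1)"
    hence "l z = l s0" using s0 unfolding L1_def L_def by simp
    thus "z = s0" using ldec[of z s0] ldec[of s0 z] by (cases "z < s0"; cases "s0 < z") auto
  qed
  define H where "H = lip_const l s0"
  define \<sigma> where "\<sigma> = sigma_max N x"
  have Hbdd: "bdd_above {\<bar>deriv l a - deriv l b\<bar> / \<bar>a - b\<bar> | a b. s0 \<le> a \<and> s0 \<le> b \<and> a \<noteq> b}"
    by (rule spec[OF A3])
  have ratio: "\<bar>deriv l u - deriv l v\<bar> / \<bar>u - v\<bar> \<le> H" if "s0 \<le> u" "s0 \<le> v" "u \<noteq> v" for u v
    unfolding H_def lip_const_def by (rule cSup_upper) (use that Hbdd in auto)
  have lip: "\<bar>deriv l u - deriv l v\<bar> \<le> H * \<bar>u - v\<bar>" if "s0 \<le> u" "s0 \<le> v" for u v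
  proof (cases "u = v")
    case True thus ?thesis by simp
  next
    case False
    hence "\<bar>u - v\<bar> > 0" by simp
    with ratio[OF that False] show ?thesis by (simp add: pos_divide_le_eq)
  qed
  have H0: "H \<ge> 0"
  proof -
    have "0 \<le> \<bar>deriv l s0 - deriv l (s0 + 1)\<bar> / \<bar>s0 - (s0 + 1)\<bar>" by simp
    also have "\<dots> \<le> H" by (rule ratio) auto
    finally show ?thesis .
  qed
  have eb: "\<eta> < 2 * real N / (\<sigma>\<^sup>2 * H)" using eta_bound unfolding s0def H_def \<sigma>_def .
  have pp: "\<sigma>\<^sup>2 * H > 0"
  proof -
    have "\<sigma>\<^sup>2 * H \<ge> 0" using H0 by simp
    moreover have "\<sigma>\<^sup>2 * H \<noteq> 0" using eb eta_pos by auto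
    ultimately show ?thesis by linarith
  qed
  define K where "K = H * \<sigma>\<^sup>2 / real N"
  have Kpos: "K > 0" unfolding K_def using pp N_pos by (simp add: mult.commute)
  have etaK: "\<eta> * K < 2"
  proof -
    have "\<eta> * (\<sigma>\<^sup>2 * H) < 2 * real N" using eb pp by (simp add: pos_less_divide_eq)
    thus ?thesis unfolding K_def using N_pos by (simp add: field_simps)
  qed
  define K' where "K' = (K + 2 / \<eta>) / 2"
  have KK': "K \<le> K'" unfolding K'_def using etaK eta_pos by (simp add: field_simps)
  have etaK': "\<eta> * K' < 2" unfolding K'_def using etaK eta_pos by (simp add: field_simps)
  have K'pos: "K' > 0" using Kpos KK' by simp
  define \<rho> where "\<rho> = \<eta> * (1 - K' * \<eta> / 2)"
  have \<rho>pos: "\<rho> > 0" unfolding \<rho>_def using etaK' eta_pos by (simp add: field_simps)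
  define c where "c = \<eta> * \<beta> / (2 * (1 - \<beta>))"
  have c0: "c \<ge> 0" unfolding c_def using beta eta_pos by simp
  define R where "R p \<longleftrightarrow> (\<forall>i<N. s0 \<le> inner p (x i))" for p
  have inR: "R p" if "L p \<le> L1" for p
    unfolding R_def
  proof (intro allI impI)
    fix i assume i: "i < N"
    have "l (inner p (x i)) \<le> (\<Sum>i<N. l (inner p (x i)))"
      using i lpos by (intro member_le_sum) (auto intro: less_imp_le)
    also have "\<dots> = real N * L p" using Lsum by simp
    also have "\<dots> \<le> real N * L1" using that by (intro mult_left_mono) auto
    finally have "l (inner p (x i)) \<le> l s0" using s0 by simp
    thus "s0 \<le> inner p (x i)" using ldec_iff by blast
  qed
  have bdry: "L1 \<le> L p" if "i < N" "inner p (x i) = s0" for p i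
  proof -
    have "real N * L1 = l (inner p (x i))" using s0 that by simp
    also have "\<dots> \<le> (\<Sum>i<N. l (inner p (x i)))"
      using that lpos by (intro member_le_sum) (auto intro: less_imp_le)
    also have "\<dots> = real N * L p" using Lsum by simp
    finally show ?thesis using N_pos by simp
  qed
  have desc: "L q \<le> L p + inner (emp_grad l N x p) (q - p) + K' / 2 * (norm (q - p))\<^sup>2"
    if "R p" "R q" for p q
  proof -
    have "L q \<le> L p + inner (emp_grad l N x p) (q - p) + K / 2 * (norm (q - p))\<^sup>2"
      unfolding L_def K_def \<sigma>_def
      by (rule descent[OF D lip H0 N_pos]) (use that in \<open>auto simp: R_def\<close>)
    also have "K / 2 * (norm (q - p))\<^sup>2 \<le> K' / 2 * (norm (q - p))\<^sup>2"
      using KK' by (intro mult_right_mono) auto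
    finally show ?thesis by simp
  qed
  define E where "E t = L (w t) + c * (norm (m (t - 1)))\<^sup>2" for t
  have E1: "E 1 = L1" unfolding E_def L1_def using m0 by simp
  have LE: "L (w t) \<le> E t" for t unfolding E_def using c0 by simp
  have step: "E (t + 1) \<le> E t - \<rho> * (norm (m t))\<^sup>2" if t1: "t \<ge> 1" and Et: "E t \<le> L1" for t
  proof -
    define p where "p = w t"
    define g where "g = emp_grad l N x p"
    define mt where "mt = m t"
    define mp where "mp = m (t - 1)"
    define \<Delta> where "\<Delta> = w (t + 1) - p"
    have \<Delta>eq: "\<Delta> = - \<eta> *\<^sub>R mt" unfolding \<Delta>_def p_def mt_def using w_step t1 by simp
    have gm: "(1 - \<beta>) *\<^sub>R g = mt - \<beta> *\<^sub>R mp"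
      unfolding g_def mt_def mp_def p_def using m_step t1 by simp
    have Et': "E t = L p + c * (norm mp)\<^sup>2" unfolding E_def p_def mp_def ..
    have Et1: "E (t + 1) = L (w (t + 1)) + c * (norm mt)\<^sup>2" unfolding E_def mt_def by simp
    have Q1: "inner g \<Delta> + K' / 2 * (norm \<Delta>)\<^sup>2 \<le> c * (norm mp)\<^sup>2 - c * (norm mt)\<^sup>2 - \<rho> * (norm mt)\<^sup>2"
    proof -
      have ip: "(1 - \<beta>) * inner g mt = (norm mt)\<^sup>2 - \<beta> * inner mp mt"
      proof -
        have "(1 - \<beta>) * inner g mt = inner ((1 - \<beta>) *\<^sub>R g) mt" by simp
        also have "\<dots> = (norm mt)\<^sup>2 - \<beta> * inner mp mt"
          unfolding gm by (simp add: inner_diff_left power2_norm_eq_inner)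
        finally show ?thesis .
      qed
      have cs: "2 * inner mp mt \<le> (norm mp)\<^sup>2 + (norm mt)\<^sup>2"
      proof -
        have "0 \<le> (norm (mp - mt))\<^sup>2" by simp
        also have "(norm (mp - mt))\<^sup>2 = (norm mp)\<^sup>2 - 2 * inner mp mt + (norm mt)\<^sup>2"
          by (simp add: power2_norm_eq_inner inner_diff_left inner_diff_right inner_commute)
        finally show ?thesis by simp
      qed
      have "(1 - \<beta>) * inner g mt \<ge> (1 - \<beta> / 2) * (norm mt)\<^sup>2 - \<beta> / 2 * (norm mp)\<^sup>2"
        using ip cs beta mult_left_mono[OF cs, of \<beta>] by (simp add: algebra_simps)
      hence igm: "inner g mt \<ge> ((1 - \<beta> / 2) * (norm mt)\<^sup>2 - \<beta> / 2 * (norm mp)\<^sup>2) / (1 - \<beta>)"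
        using beta by (simp add: pos_divide_le_eq mult.commute)
      have "inner g \<Delta> = - \<eta> * inner g mt" unfolding \<Delta>eq by simp
      also have "\<dots> \<le> - \<eta> * (((1 - \<beta> / 2) * (norm mt)\<^sup>2 - \<beta> / 2 * (norm mp)\<^sup>2) / (1 - \<beta>))"
        using mult_left_mono[OF igm, of \<eta>] eta_pos by simp
      finally have "inner g \<Delta> + K' / 2 * (norm \<Delta>)\<^sup>2 \<le>
          - \<eta> * (((1 - \<beta> / 2) * (norm mt)\<^sup>2 - \<beta> / 2 * (norm mp)\<^sup>2) / (1 - \<beta>)) + K' / 2 * (\<eta>\<^sup>2 * (norm mt)\<^sup>2)"
        unfolding \<Delta>eq using eta_pos by (simp add: power_mult_distrib)
      also have "\<dots> = c * (norm mp)\<^sup>2 - c * (norm mt)\<^sup>2 - \<rho> * (norm mt)\<^sup>2"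
        unfolding c_def \<rho>_def using beta by (simp add: divide_simps) (simp add: algebra_simps power2_eq_square)
      finally show ?thesis .
    qed
    have Lp: "L p \<le> L1" using LE[of t] Et unfolding p_def by simp
    have Rp: "R p" using inR[OF Lp] .
    have Rq: "R (w (t + 1))"
    proof (rule ccontr)
      assume nR: "\<not> R (w (t + 1))"
      define a where "a i = inner p (x i)" for i
      define d where "d i = inner \<Delta> (x i)" for i
      have wq: "w (t + 1) = p + \<Delta>" unfolding \<Delta>_def by simp
      have ad: "inner (w (t + 1)) (x i) = a i + d i" for i
        unfolding wq a_def d_def by (simp add: inner_add_left)
      define B where "B = {i. i < N \<and> a i + d i < s0}"
      have Bne: "B \<noteq> {}" using nR ad unfolding R_def B_def by (auto simp: not_le)
      have Bfin: "finite B" unfolding B_def by simp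
      have aR: "s0 \<le> a i" if "i < N" for i using Rp that unfolding R_def a_def by simp
      have dneg: "d i < 0" if "i \<in> B" for i using that aR unfolding B_def by force
      define sv where "sv i = (s0 - a i) / d i" for i
      have sv0: "0 \<le> sv i" if "i \<in> B" for i
        using dneg[OF that] aR[of i] that unfolding sv_def B_def by (simp add: divide_nonpos_neg)
      have sv1: "sv i < 1" if "i \<in> B" for i
        using dneg[OF that] that unfolding sv_def B_def by (simp add: divide_less_eq)
      have sveq: "a i + sv i * d i = s0" if "i \<in> B" for i
        using dneg[OF that] unfolding sv_def by simp
      define ss where "ss = Min (sv ` B)"
      obtain i0 where i0: "i0 \<in> B" "sv i0 = ss"
      proof -
        have "Min (sv ` B) \<in> sv ` B" using Bne Bfin by (intro Min_in) auto
        thus ?thesis using that unfolding ss_def by auto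
      qed
      have ssle: "ss \<le> sv j" if "j \<in> B" for j
        unfolding ss_def using Bfin that by (intro Min_le) auto
      have ss0: "0 \<le> ss" and ss1: "ss < 1" using sv0[OF i0(1)] sv1[OF i0(1)] i0(2) by auto
      define z where "z = p + ss *\<^sub>R \<Delta>"
      have zi: "inner z (x j) = a j + ss * d j" for j
        unfolding z_def a_def d_def by (simp add: inner_add_left)
      have Rz: "R z" unfolding R_def
      proof (intro allI impI)
        fix j assume j: "j < N"
        show "s0 \<le> inner z (x j)"
        proof (cases "j \<in> B")
          case True
          have "sv j * d j \<le> ss * d j"
            using ssle[OF True] dneg[OF True] by (intro mult_right_mono_neg) auto
          thus ?thesis using sveq[OF True] zi[of j] by simp
        next
          case False
          hence "s0 \<le> a j + d j" using j unfolding B_def by auto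
          hence "(1 - ss) * s0 + ss * s0 \<le> (1 - ss) * a j + ss * (a j + d j)"
            using aR[OF j] ss0 ss1 by (intro add_mono mult_left_mono) auto
          thus ?thesis using zi[of j] by (simp add: algebra_simps)
        qed
      qed
      define G where "G = inner g \<Delta>"
      define b where "b = K' / 2 * (norm \<Delta>)\<^sup>2"
      have Lz: "L z \<le> L p + ss * G + ss\<^sup>2 * b"
        using desc[OF Rp Rz] unfolding z_def G_def b_def g_def
        by (simp add: power_mult_distrib algebra_simps)
      have q1: "L p + G + b \<le> L1"
      proof -
        have "L p + G + b \<le> L p + c * (norm mp)\<^sup>2 - c * (norm mt)\<^sup>2 - \<rho> * (norm mt)\<^sup>2"
          using Q1 unfolding G_def b_def by simp
        also have "\<dots> \<le> E t" unfolding Et' using c0 \<rho>pos by (smt (verit) mult_nonneg_nonneg zero_le_power2)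
        finally show ?thesis using Et by simp
      qed
      have "L p + ss * G + ss\<^sup>2 * b = (1 - ss) * L p + ss * (L p + G + b) - b * ss * (1 - ss)"
        by (simp add: algebra_simps power2_eq_square)
      also have "\<dots> \<le> (1 - ss) * L1 + ss * L1 - b * ss * (1 - ss)"
        using Lp q1 ss0 ss1 by (intro diff_right_mono add_mono mult_left_mono) auto
      finally have Lz2: "L z \<le> L1 - b * ss * (1 - ss)" using Lz by (simp add: algebra_simps)
      have i0N: "i0 < N" using i0(1) unfolding B_def by simp
      have "L1 \<le> L z" by (rule bdry[OF i0N]) (use zi sveq[OF i0(1)] i0(2) in simp)
      hence bss: "b * ss * (1 - ss) \<le> 0" using Lz2 by simp
      have "\<Delta> \<noteq> 0" using dneg[OF i0(1)] unfolding d_def by auto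
      hence bpos: "b > 0" unfolding b_def using K'pos by simp
      have "ss = 0"
      proof (rule ccontr)
        assume "ss \<noteq> 0"
        hence "b * ss * (1 - ss) > 0" using bpos ss0 ss1 by simp
        thus False using bss by simp
      qed
      hence ai0: "a i0 = s0" using sveq[OF i0(1)] i0(2) by simp
      have "L1 \<le> L p" by (rule bdry[OF i0N]) (use ai0 in \<open>simp add: a_def\<close>)
      hence Lpe: "L p = L1" using Lp by simp
      hence cmp: "c * (norm mp)\<^sup>2 = 0"
        using Et Et' c0 by (smt (verit) mult_nonneg_nonneg zero_le_power2)
      have bmp: "\<beta> *\<^sub>R mp = 0"
      proof (cases "\<beta> = 0")
        case False
        hence "c \<noteq> 0" unfolding c_def using beta eta_pos by simp
        hence "mp = 0" using cmp by simp
        thus ?thesis by simp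
      qed simp
      have N1: "N = 1"
      proof (rule ccontr)
        assume "N \<noteq> 1"
        hence N2: "N \<ge> 2" using N_pos by linarith
        obtain j where j: "j < N" "j \<noteq> i0"
        proof -
          show ?thesis using that[of "if i0 = 0 then 1 else 0"] N2 by (cases "i0 = 0") auto
        qed
        have "l (a i0) + l (a j) = (\<Sum>i\<in>{i0, j}. l (a i))" using j by simp
        also have "\<dots> \<le> (\<Sum>i<N. l (a i))"
          using j i0N lpos by (intro sum_mono2) (auto intro: less_imp_le)
        also have "\<dots> = real N * L p" unfolding Lsum a_def ..
        also have "\<dots> = l (a i0)" using Lpe s0 ai0 by simp
        finally show False using lpos[of "a j"] by simp
      qed
      hence i00: "i0 = 0" using i0N by simp
      have mtg: "mt = (1 - \<beta>) *\<^sub>R g" using gm bmp by simp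
      have gx: "inner g (x 0) = deriv l (a 0) * (norm (x 0))\<^sup>2"
        unfolding g_def emp_grad_def N1 a_def by (simp add: power2_norm_eq_inner)
      have "d 0 = - \<eta> * (1 - \<beta>) * (deriv l (a 0) * (norm (x 0))\<^sup>2)"
        unfolding d_def \<Delta>eq mtg using gx by simp
      moreover have "deriv l (a 0) * (norm (x 0))\<^sup>2 \<le> 0"
        using A2_neg by (simp add: mult_nonpos_nonneg less_imp_le)
      ultimately have "d 0 \<ge> 0" using eta_pos beta
        by (simp add: mult_nonpos_nonpos mult_nonneg_nonpos)
      thus False using dneg[OF i0(1)] i00 by simp
    qed
    have "L (w (t + 1)) \<le> L p + inner g \<Delta> + K' / 2 * (norm \<Delta>)\<^sup>2"
      using desc[OF Rp Rq] unfolding g_def \<Delta>_def by simp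
    thus ?thesis using Q1 Et' Et1 unfolding mt_def by simp
  qed
  have inv: "E (n + 1) + \<rho> * (\<Sum>k<n. (norm (m (Suc k)))\<^sup>2) \<le> L1" for n
  proof (induction n)
    case 0 thus ?case using E1 by simp
  next
    case (Suc n)
    have "0 \<le> \<rho> * (\<Sum>k<n. (norm (m (Suc k)))\<^sup>2)" using \<rho>pos by (intro mult_nonneg_nonneg sum_nonneg) auto
    hence "E (n + 1) \<le> L1" using Suc by linarith
    from step[OF _ this] have "E (n + 2) \<le> E (n + 1) - \<rho> * (norm (m (n + 1)))\<^sup>2" by simp
    thus ?case using Suc by (simp add: algebra_simps)
  qed
  have E0: "E t \<ge> 0" for t unfolding E_def using Lpos[of "w t"] c0 by (intro add_nonneg_nonneg) auto
  define Bd where "Bd = \<eta>\<^sup>2 * (L1 / \<rho>)"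
  have Bd0: "Bd \<ge> 0" unfolding Bd_def using L1pos \<rho>pos by simp
  have dn: "norm (w (k + 2) - w (k + 1)) = \<eta> * norm (m (Suc k))" for k
  proof -
    have "w (k + 2) = w (k + 1) - \<eta> *\<^sub>R m (k + 1)" using w_step[rule_format, of "k + 1"] by simp
    thus ?thesis using eta_pos by simp
  qed
  have bound: "(\<Sum>k<n. (norm (w (k + 2) - w (k + 1)))\<^sup>2) \<le> Bd" for n
  proof -
    have "\<rho> * (\<Sum>k<n. (norm (m (Suc k)))\<^sup>2) \<le> L1" using inv[of n] E0[of "n + 1"] by linarith
    hence S: "(\<Sum>k<n. (norm (m (Suc k)))\<^sup>2) \<le> L1 / \<rho>" using \<rho>pos by (simp add: pos_le_divide_eq mult.commute)
    have "(\<Sum>k<n. (norm (w (k + 2) - w (k + 1)))\<^sup>2) = \<eta>\<^sup>2 * (\<Sum>k<n. (norm (m (Suc k)))\<^sup>2)"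
      unfolding dn by (simp add: power_mult_distrib sum_distrib_left)
    also have "\<dots> \<le> Bd" unfolding Bd_def using S by (intro mult_left_mono) auto
    finally show ?thesis .
  qed
  have summ: "summable (\<lambda>t. (norm (w (t + 2) - w (t + 1)))\<^sup>2)"
    by (rule summableI_nonneg_bounded[where x=Bd]) (use bound in auto)
  define C where "C = norm (w 1) + sqrt (Bd + 1)"
  have wb: "norm (w (n + 1)) \<le> C * sqrt (real (n + 1))" for n
  proof -
    have tel: "(\<Sum>k<n. w (Suc k + 1) - w (k + 1)) = w (n + 1) - w (0 + 1)"
      by (rule sum_lessThan_telescope[where f="\<lambda>k. w (k + 1)"])
    have "norm (w (n + 1)) = norm (w 1 + (\<Sum>k<n. w (k + 2) - w (k + 1)))"
      using tel by simp
    also have "\<dots> \<le> norm (w 1) + (\<Sum>k<n. norm (w (k + 2) - w (k + 1)))"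
      by (intro order_trans[OF norm_triangle_ineq] add_left_mono norm_sum)
    also have "(\<Sum>k<n. norm (w (k + 2) - w (k + 1))) \<le> sqrt ((Bd + 1) * (real n + 1))"
      by (rule sum_sqrt_bound[OF _ bound Bd0]) simp
    also have "sqrt ((Bd + 1) * (real n + 1)) = sqrt (Bd + 1) * sqrt (real (n + 1))"
      by (simp add: real_sqrt_mult)
    also have "norm (w 1) + sqrt (Bd + 1) * sqrt (real (n + 1)) \<le> C * sqrt (real (n + 1))"
    proof -
      have "1 \<le> sqrt (real (n + 1))" by simp
      hence "norm (w 1) \<le> norm (w 1) * sqrt (real (n + 1))"
        by (metis mult.right_neutral mult_left_mono norm_ge_zero)
      thus ?thesis unfolding C_def by (simp add: algebra_simps)
    qed
    finally show ?thesis by simp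
  qed
  have "(\<lambda>t. norm (w t)) \<in> O(\<lambda>t. sqrt (real t))"
  proof (rule bigoI[where c=C])
    show "\<forall>\<^sub>F t in at_top. norm (norm (w t)) \<le> C * norm (sqrt (real t))"
      unfolding eventually_at_top_linorder
    proof (intro exI allI impI)
      fix t :: nat assume "t \<ge> 1"
      then obtain n where "t = n + 1" by (metis le_add_diff_inverse2)
      thus "norm (norm (w t)) \<le> C * norm (sqrt (real t))" using wb[of n] by simp
    qed
  qed
  with summ show ?thesis by blast
qed

end
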